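(* Let $n\ge 1$, $m\in\mathbb Z_+^n$, $c_\alpha\in\mathbb C$ for $0\le\alpha\le m$ (with $c_\alpha=0$ otherwise), $P(z)=\sum_{0\le\alpha\le m}c_\alpha z^\alpha$, $X_0=\{\tau\in\mathbb Z^n:\tau\ge0,\ \tau\not\ge m\}$, and $\varphi:X_0\to\mathbb C$, extended by zero to $\mathbb Z_+^n\setminus X_0$. Let $f:\mathbb Z_+^n\to\mathbb C$ satisfy $\sum_{0\le\alpha\le m}c_\alpha f(x+\alpha)=0$ for all $x\in\mathbb Z_+^n$ and $f=\varphi$ on $X_0$, and assume $F(z)=\sum_{x\ge0}f(x)/z^{x+I}$ converges in some neighborhood of infinity. Then in that neighborhood $$P(z)F(z)=\sum_J\sum_{\tau\in\Gamma_J}\Phi_{\tau,J}(z)\,P_\tau(z),\qquad\text{where } P_\tau(z)=\sum_{\alpha\le m,\ \alpha\not\le\tau}c_\alpha z^\alpha,$$ the outer sum running over all $J\in\{0,1\}^n$.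
   Context: Notation: $x\le y$ is componentwise; $x\not\ge y$ (resp. $x\not\le y$) means $x\ge y$ (resp. $x\le y$) fails; $I=(1,\dots,1)$; $z^x=\prod z_k^{x_k}$. $\Pi_m=\{x\in\mathbb Z^n:0\le x_k\le m_k\ \forall k\}$. For $J=(j_1,\dots,j_n)\in\{0,1\}^n$, $\Gamma_J=\{x\in\Pi_m: x_k=m_k \text{ if } j_k=1,\ x_k<m_k \text{ if } j_k=0\}$; these sets partition $\Pi_m$. For $y\in\mathbb Z_+^n$, $Jy=(j_1y_1,\dots,j_ny_n)$. For $\tau\in\Gamma_J$, $\Phi_{\tau,J}(z)=\sum_{x\in\tau+J\mathbb Z_+^n}\varphi(x)/z^{x+I}$, i.e. the sum of $\varphi(\tau+Jy)/z^{\tau+Jy+I}$ over the distinct points $\tau+Jy$, $y\in\mathbb Z_+^n$ (equivalently over $y\ge0$ with $y_k=0$ whenever $j_k=0$). *)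

theory Defs
  imports "HOL-Analysis.Analysis"
begin

text \<open>A vector J in {0,1}^n is represented by the set of indices k with j_k = 1.\<close>

definition mpow :: "('n::finite \<Rightarrow> complex) \<Rightarrow> ('n \<Rightarrow> nat) \<Rightarrow> complex" where
  "mpow z x = (\<Prod>k\<in>UNIV. z k ^ x k)"

definition X0 :: "('n::finite \<Rightarrow> nat) \<Rightarrow> ('n \<Rightarrow> nat) set" where
  "X0 m = {\<tau>. \<not> (m \<le> \<tau>)}"

definition Gamma :: "('n::finite \<Rightarrow> nat) \<Rightarrow> 'n set \<Rightarrow> ('n \<Rightarrow> nat) set" where
  "Gamma m J = {x. x \<le> m \<and> (\<forall>k. (k \<in> J \<longrightarrow> x k = m k) \<and> (k \<notin> J \<longrightarrow> x k < m k))}"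

definition Phi :: "(('n::finite \<Rightarrow> nat) \<Rightarrow> complex) \<Rightarrow> ('n \<Rightarrow> nat) \<Rightarrow> 'n set
    \<Rightarrow> ('n \<Rightarrow> complex) \<Rightarrow> complex" where
  "Phi \<phi> \<tau> J z = infsum (\<lambda>x. \<phi> x / mpow z (\<lambda>k. x k + 1))
      {x. \<exists>y::'n \<Rightarrow> nat. x = (\<lambda>k. \<tau> k + (if k \<in> J then y k else 0))}"

definition Ppoly :: "(('n::finite \<Rightarrow> nat) \<Rightarrow> complex) \<Rightarrow> ('n \<Rightarrow> nat) \<Rightarrow> ('n \<Rightarrow> complex) \<Rightarrow> complex" where
  "Ppoly c m z = (\<Sum>\<alpha>\<in>{\<alpha>. \<alpha> \<le> m}. c \<alpha> * mpow z \<alpha>)"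

definition Ptau :: "(('n::finite \<Rightarrow> nat) \<Rightarrow> complex) \<Rightarrow> ('n \<Rightarrow> nat) \<Rightarrow> ('n \<Rightarrow> nat)
    \<Rightarrow> ('n \<Rightarrow> complex) \<Rightarrow> complex" where
  "Ptau c m \<tau> z = (\<Sum>\<alpha>\<in>{\<alpha>. \<alpha> \<le> m \<and> \<not> (\<alpha> \<le> \<tau>)}. c \<alpha> * mpow z \<alpha>)"

definition genF :: "(('n::finite \<Rightarrow> nat) \<Rightarrow> complex) \<Rightarrow> ('n \<Rightarrow> complex) \<Rightarrow> complex" where
  "genF f z = infsum (\<lambda>x. f x / mpow z (\<lambda>k. x k + 1)) UNIV"

end

theory Submission
  imports Defs
begin

lemma mpow_add: "mpow z (\<lambda>k. a k + b k) = mpow z a * mpow z b"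
  unfolding mpow_def by (simp add: power_add prod.distrib)

lemma mpow_nz: "(\<forall>k. z k \<noteq> 0) \<Longrightarrow> mpow z a \<noteq> 0"
  unfolding mpow_def by simp

lemma mpow_zero: "z k = 0 \<Longrightarrow> mpow z (\<lambda>k. x k + 1) = 0"
  unfolding mpow_def by (rule prod_zero) auto

lemma has_sum_finsum:
  fixes f :: "'i \<Rightarrow> 'a \<Rightarrow> 'b::topological_comm_monoid_add"
  assumes "finite I" "\<And>i. i \<in> I \<Longrightarrow> (f i has_sum s i) A"
  shows "((\<lambda>x. \<Sum>i\<in>I. f i x) has_sum (\<Sum>i\<in>I. s i)) A"
  using assms
proof (induction I rule: finite_induct)
  case empty then show ?case by simp
next
  case (insert a I)
  then show ?case by (simp add: has_sum_add)
qed

lemma finite_le: "finite {x::'n::finite \<Rightarrow> nat. x \<le> m}"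
proof -
  have "{x::'n \<Rightarrow> nat. x \<le> m} = PiE UNIV (\<lambda>k. {..m k})"
    by (auto simp: le_fun_def PiE_UNIV_domain)
  then show ?thesis by (simp add: finite_PiE)
qed

lemma stepA:
  fixes m :: "'n::finite \<Rightarrow> nat" and c f :: "('n \<Rightarrow> nat) \<Rightarrow> complex"
  assumes nz: "\<forall>k. z k \<noteq> 0"
    and rec: "\<And>x. (\<Sum>\<alpha>\<in>{\<alpha>. \<alpha> \<le> m}. c \<alpha> * f (\<lambda>k. x k + \<alpha> k)) = 0"
    and gs: "(\<lambda>x. f x / mpow z (\<lambda>k. x k + 1)) summable_on UNIV"
  shows "((\<lambda>x. \<Sum>\<alpha>\<in>{\<alpha>. \<alpha> \<le> m}. if \<alpha> \<le> x then c \<alpha> * mpow z \<alpha> * (f x / mpow z (\<lambda>k. x k + 1)) else 0) has_sum 0) UNIV"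
proof -
  define g where "g x = f x / mpow z (\<lambda>k. x k + 1)" for x
  define r where "r \<alpha> y = c \<alpha> * f (\<lambda>k. y k + \<alpha> k) / mpow z (\<lambda>k. y k + 1)" for \<alpha> y
  have each: "r \<alpha> summable_on UNIV \<and> ((\<lambda>x. if \<alpha> \<le> x then c \<alpha> * mpow z \<alpha> * g x else 0) has_sum infsum (r \<alpha>) UNIV) UNIV" for \<alpha>
  proof -
    define A where "A = {x. \<alpha> \<le> x}"
    define sh where "sh y = (\<lambda>k. y k + \<alpha> k)" for y :: "'n \<Rightarrow> nat"
    have "g summable_on A" using gs unfolding g_def by (rule summable_on_subset_banach) auto
    then have "(\<lambda>x. c \<alpha> * mpow z \<alpha> * g x) summable_on A" by (rule summable_on_cmult_right)
    then obtain V where V: "((\<lambda>x. c \<alpha> * mpow z \<alpha> * g x) has_sum V) A"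
      unfolding summable_on_def by blast
    have inj: "inj_on sh UNIV" unfolding sh_def inj_on_def by (auto simp: fun_eq_iff)
    have img: "sh ` UNIV = A"
    proof
      show "sh ` UNIV \<subseteq> A" unfolding sh_def A_def by (auto simp: le_fun_def)
      show "A \<subseteq> sh ` UNIV"
      proof
        fix x assume "x \<in> A"
        then have "x = sh (\<lambda>k. x k - \<alpha> k)" unfolding A_def sh_def by (auto simp: le_fun_def fun_eq_iff)
        then show "x \<in> sh ` UNIV" by blast
      qed
    qed
    have comp: "(\<lambda>x. c \<alpha> * mpow z \<alpha> * g x) \<circ> sh = r \<alpha>"
    proof
      fix y
      have e: "(\<lambda>k. sh y k + 1) = (\<lambda>k. \<alpha> k + (y k + 1))" unfolding sh_def by (auto simp: fun_eq_iff)
      have "mpow z (\<lambda>k. sh y k + 1) = mpow z \<alpha> * mpow z (\<lambda>k. y k + 1)"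
        unfolding e by (rule mpow_add)
      then show "((\<lambda>x. c \<alpha> * mpow z \<alpha> * g x) \<circ> sh) y = r \<alpha> y"
        using mpow_nz[OF nz, of \<alpha>] unfolding g_def r_def sh_def by (simp add: field_simps)
    qed
    have rV: "(r \<alpha> has_sum V) UNIV" using V unfolding img[symmetric] has_sum_reindex[OF inj] comp .
    then have "V = infsum (r \<alpha>) UNIV" by (simp add: infsumI)
    moreover have "((\<lambda>x. if \<alpha> \<le> x then c \<alpha> * mpow z \<alpha> * g x else 0) has_sum V) UNIV"
      using V by (subst has_sum_cong_neutral[where T=A]) (auto simp: A_def)
    ultimately show ?thesis using rV by (auto simp: summable_on_def)
  qed
  have "((\<lambda>x. \<Sum>\<alpha>\<in>{\<alpha>. \<alpha> \<le> m}. if \<alpha> \<le> x then c \<alpha> * mpow z \<alpha> * g x else 0) has_sum (\<Sum>\<alpha>\<in>{\<alpha>. \<alpha> \<le> m}. infsum (r \<alpha>) UNIV)) UNIV"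
    using each by (intro has_sum_finsum[OF finite_le]) blast
  moreover have "(\<Sum>\<alpha>\<in>{\<alpha>. \<alpha> \<le> m}. infsum (r \<alpha>) UNIV) = 0"
  proof -
    have rs: "r \<alpha> summable_on UNIV" for \<alpha>
      using each by blast
    have "((\<lambda>y. \<Sum>\<alpha>\<in>{\<alpha>. \<alpha> \<le> m}. r \<alpha> y) has_sum (\<Sum>\<alpha>\<in>{\<alpha>. \<alpha> \<le> m}. infsum (r \<alpha>) UNIV)) UNIV"
      by (rule has_sum_finsum[OF finite_le]) (use rs in \<open>simp add: has_sum_infsum\<close>)
    moreover have "(\<lambda>y. \<Sum>\<alpha>\<in>{\<alpha>. \<alpha> \<le> m}. r \<alpha> y) = (\<lambda>y. 0)"
      unfolding r_def using rec by (simp add: sum_divide_distrib[symmetric])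
    ultimately show ?thesis by (simp add: has_sum_unique[OF _ has_sum_0])
  qed
  ultimately show ?thesis unfolding g_def by simp
qed

definition Sset :: "('n::finite \<Rightarrow> nat) \<Rightarrow> 'n set \<Rightarrow> ('n \<Rightarrow> nat) set" where
  "Sset \<tau> J = {x. \<exists>y::'n \<Rightarrow> nat. x = (\<lambda>k. \<tau> k + (if k \<in> J then y k else 0))}"

lemma ptau_eq:
  assumes "\<tau> \<in> Gamma m J" "x \<in> Sset \<tau> J"
  shows "Ptau c m \<tau> z = Ptau c m x z"
proof -
  obtain y where x: "x = (\<lambda>k. \<tau> k + (if k \<in> J then y k else 0))" using assms(2) unfolding Sset_def by blast
  have "{\<alpha>. \<alpha> \<le> m \<and> \<not> \<alpha> \<le> \<tau>} = {\<alpha>. \<alpha> \<le> m \<and> \<not> \<alpha> \<le> x}"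
  proof -
    have "\<alpha> \<le> \<tau> \<longleftrightarrow> \<alpha> \<le> x" if "\<alpha> \<le> m" for \<alpha>
    proof
      assume "\<alpha> \<le> \<tau>" then show "\<alpha> \<le> x" unfolding x le_fun_def by (metis trans_le_add1)
    next
      assume a: "\<alpha> \<le> x"
      show "\<alpha> \<le> \<tau>" unfolding le_fun_def
      proof
        fix k show "\<alpha> k \<le> \<tau> k"
        proof (cases "k \<in> J")
          case True then show ?thesis using assms(1) that unfolding Gamma_def le_fun_def by auto
        next
          case False then show ?thesis using a unfolding x le_fun_def by (metis add_0_right)
        qed
      qed
    qed
    then show ?thesis by blast
  qed
  then show ?thesis unfolding Ptau_def by simp
qed

lemma h_eq:
  assumes "\<And>x. x \<notin> X0 m \<Longrightarrow> \<phi> x = 0" "\<And>x. x \<in> X0 m \<Longrightarrow> f x = \<phi> x"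
  shows "\<phi> x / d * Ptau c m x z = f x / d * Ptau c m x z"
proof (cases "x \<in> X0 m")
  case True then show ?thesis using assms by simp
next
  case False
  then have "m \<le> x" unfolding X0_def by simp
  then have "{\<alpha>. \<alpha> \<le> m \<and> \<not> \<alpha> \<le> x} = {}" using order_trans by blast
  then have "Ptau c m x z = 0" unfolding Ptau_def by (metis sum.empty)
  then show ?thesis by simp
qed

lemma S_class:
  assumes "\<tau> \<in> Gamma m J" "x \<in> Sset \<tau> J"
  shows "J = {k. m k \<le> x k}" "\<tau> = (\<lambda>k. min (x k) (m k))"
proof -
  obtain y where x: "x = (\<lambda>k. \<tau> k + (if k \<in> J then y k else 0))" using assms(2) unfolding Sset_def by blast
  have g: "\<And>k. (k \<in> J \<longrightarrow> \<tau> k = m k) \<and> (k \<notin> J \<longrightarrow> \<tau> k < m k)" using assms(1) unfolding Gamma_def by auto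
  show "J = {k. m k \<le> x k}"
    using g unfolding x by (auto, metis add_0_right not_le)
  show "\<tau> = (\<lambda>k. min (x k) (m k))"
    using g unfolding x by (force simp: fun_eq_iff)
qed

lemma S_cover: "x \<in> Sset (\<lambda>k. min (x k) (m k)) {k. m k \<le> x k}"
  "(\<lambda>k. min (x k) (m k)) \<in> Gamma m {k. m k \<le> x k}"
  unfolding Sset_def Gamma_def
  by (auto simp: le_fun_def fun_eq_iff intro!: exI[of _ "\<lambda>k. x k - m k"])

theorem theorem2:
  fixes m :: "'n::finite \<Rightarrow> nat"
    and c \<phi> f :: "('n \<Rightarrow> nat) \<Rightarrow> complex"
    and R :: real
  assumes c_zero: "\<And>\<alpha>. \<not> (\<alpha> \<le> m) \<Longrightarrow> c \<alpha> = 0"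
    and \<phi>_ext: "\<And>x. x \<notin> X0 m \<Longrightarrow> \<phi> x = 0"
    and rec: "\<And>x. (\<Sum>\<alpha>\<in>{\<alpha>. \<alpha> \<le> m}. c \<alpha> * f (\<lambda>k. x k + \<alpha> k)) = 0"
    and init: "\<And>x. x \<in> X0 m \<Longrightarrow> f x = \<phi> x"
    and conv: "\<And>z. (\<forall>k. R < norm (z k)) \<Longrightarrow>
                 (\<lambda>x. f x / mpow z (\<lambda>k. x k + 1)) summable_on UNIV"
  shows "\<forall>z. (\<forall>k. R < norm (z k)) \<longrightarrow>
           Ppoly c m z * genF f z =
           (\<Sum>J\<in>(UNIV :: 'n set set). \<Sum>\<tau>\<in>Gamma m J. Phi \<phi> \<tau> J z * Ptau c m \<tau> z)"
proof (intro allI impI)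
  fix z :: "'n \<Rightarrow> complex"
  assume hz: "\<forall>k. R < norm (z k)"
  show "Ppoly c m z * genF f z =
           (\<Sum>J\<in>(UNIV :: 'n set set). \<Sum>\<tau>\<in>Gamma m J. Phi \<phi> \<tau> J z * Ptau c m \<tau> z)"
  proof (cases "\<exists>k. z k = 0")
    case True
    then obtain k where "z k = 0" by blast
    note mz = mpow_zero[of z k, OF this]
    show ?thesis unfolding genF_def Phi_def mz by simp
  next
    case False
    then have nz: "\<forall>k. z k \<noteq> 0" by blast
    define g where "g x = f x / mpow z (\<lambda>k. x k + 1)" for x
    define Q where "Q x = (\<Sum>\<alpha>\<in>{\<alpha>. \<alpha> \<le> m}. if \<alpha> \<le> x then c \<alpha> * mpow z \<alpha> * g x else 0)" for x
    define h where "h x = g x * Ptau c m x z" for x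
    have gs: "g summable_on UNIV" unfolding g_def using conv hz by blast
    have QA: "(Q has_sum 0) UNIV" unfolding Q_def g_def by (rule stepA[OF nz rec conv[OF hz]])
    have split: "Ppoly c m z * g x = h x + Q x" for x
    proof -
      let ?A = "{\<alpha>. \<alpha> \<le> m}"
      have "Ppoly c m z * g x = (\<Sum>\<alpha>\<in>?A. c \<alpha> * mpow z \<alpha> * g x)"
        unfolding Ppoly_def by (simp add: sum_distrib_right)
      also have "\<dots> = (\<Sum>\<alpha>\<in>?A. (if \<not> \<alpha> \<le> x then c \<alpha> * mpow z \<alpha> * g x else 0)
                       + (if \<alpha> \<le> x then c \<alpha> * mpow z \<alpha> * g x else 0))"
        by (rule sum.cong) auto
      also have "\<dots> = (\<Sum>\<alpha>\<in>?A. (if \<not> \<alpha> \<le> x then c \<alpha> * mpow z \<alpha> * g x else 0)) + Q x"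
        unfolding Q_def by (rule sum.distrib)
      also have "(\<Sum>\<alpha>\<in>?A. (if \<not> \<alpha> \<le> x then c \<alpha> * mpow z \<alpha> * g x else 0))
          = (\<Sum>\<alpha>\<in>{\<alpha>\<in>?A. \<not> \<alpha> \<le> x}. c \<alpha> * mpow z \<alpha> * g x)"
        by (rule sum.inter_filter[OF finite_le, symmetric])
      also have "\<dots> = h x" unfolding h_def Ptau_def
        by (simp add: sum_distrib_left mult.commute)
      finally show ?thesis .
    qed
    have PgS: "(\<lambda>x. Ppoly c m z * g x) summable_on UNIV" by (rule summable_on_cmult_right[OF gs])
    have "(\<lambda>x. Ppoly c m z * g x + (-1) * Q x) summable_on UNIV"
      by (rule summable_on_add[OF PgS summable_on_cmult_right]) (use QA in \<open>auto simp: summable_on_def\<close>)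
    moreover have "(\<lambda>x. Ppoly c m z * g x + (-1) * Q x) = h" using split by (auto simp: fun_eq_iff)
    ultimately have hs: "h summable_on UNIV" by simp
    have LHS: "Ppoly c m z * genF f z = infsum h UNIV"
    proof -
      have "Ppoly c m z * genF f z = infsum (\<lambda>x. Ppoly c m z * g x) UNIV"
        unfolding genF_def g_def by (rule infsum_cmult_right[symmetric]) (use gs[unfolded g_def] in simp)
      also have "\<dots> = infsum (\<lambda>x. h x + Q x) UNIV" by (simp add: split)
      also have "\<dots> = infsum h UNIV + infsum Q UNIV"
        by (rule infsum_add[OF hs]) (use QA in \<open>auto simp: summable_on_def\<close>)
      also have "infsum Q UNIV = 0" using QA by (simp add: infsumI)
      finally show ?thesis by simp
    qed
    define \<psi> where "\<psi> x = \<phi> x / mpow z (\<lambda>k. x k + 1)" for x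
    have \<psi>s: "\<psi> summable_on UNIV"
    proof -
      have "g summable_on X0 m" by (rule summable_on_subset_banach[OF gs]) auto
      moreover have "g summable_on X0 m \<longleftrightarrow> \<psi> summable_on UNIV"
        by (rule summable_on_cong_neutral) (auto simp: \<psi>_def g_def \<phi>_ext init)
      ultimately show ?thesis by simp
    qed
    have trm: "Phi \<phi> \<tau> J z * Ptau c m \<tau> z = infsum h (Sset \<tau> J)" if "\<tau> \<in> Gamma m J" for \<tau> J
    proof -
      have "Phi \<phi> \<tau> J z * Ptau c m \<tau> z = infsum \<psi> (Sset \<tau> J) * Ptau c m \<tau> z"
        unfolding Phi_def Sset_def \<psi>_def ..
      also have "\<dots> = infsum (\<lambda>x. \<psi> x * Ptau c m \<tau> z) (Sset \<tau> J)"
        by (rule infsum_cmult_left[symmetric]) (rule summable_on_subset_banach[OF \<psi>s], simp)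
      also have "\<dots> = infsum h (Sset \<tau> J)"
      proof (rule infsum_cong)
        fix x assume "x \<in> Sset \<tau> J"
        then have "Ptau c m \<tau> z = Ptau c m x z" by (rule ptau_eq[OF that])
        then show "\<psi> x * Ptau c m \<tau> z = h x"
          unfolding \<psi>_def h_def g_def using h_eq[OF \<phi>_ext init] by simp
      qed
      finally show ?thesis .
    qed
    have hsub: "h summable_on A" for A by (rule summable_on_subset_banach[OF hs]) simp
    have finG: "finite (Gamma m J)" for J
      by (rule finite_subset[OF _ finite_le[of m]]) (auto simp: Gamma_def)
    have "(\<Sum>J\<in>(UNIV :: 'n set set). \<Sum>\<tau>\<in>Gamma m J. Phi \<phi> \<tau> J z * Ptau c m \<tau> z)
        = (\<Sum>J\<in>(UNIV :: 'n set set). \<Sum>\<tau>\<in>Gamma m J. infsum h (Sset \<tau> J))"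
      by (rule sum.cong[OF refl], rule sum.cong[OF refl], rule trm)
    also have "\<dots> = (\<Sum>J\<in>(UNIV :: 'n set set). infsum h (\<Union>\<tau>\<in>Gamma m J. Sset \<tau> J))"
    proof (rule sum.cong[OF refl], rule sum_infsum[OF finG hsub])
      fix J \<tau> \<tau>' assume "\<tau> \<in> Gamma m J" "\<tau>' \<in> Gamma m J" "\<tau> \<noteq> \<tau>'"
      show "Sset \<tau> J \<inter> Sset \<tau>' J = {}"
      proof (rule ccontr)
        assume "\<not> ?thesis"
        then obtain x where x: "x \<in> Sset \<tau> J" "x \<in> Sset \<tau>' J" by blast
        have "\<tau> = (\<lambda>k. min (x k) (m k))" by (rule S_class(2)[OF \<open>\<tau> \<in> Gamma m J\<close> x(1)])
        moreover have "\<tau>' = (\<lambda>k. min (x k) (m k))" by (rule S_class(2)[OF \<open>\<tau>' \<in> Gamma m J\<close> x(2)])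
        ultimately show False using \<open>\<tau> \<noteq> \<tau>'\<close> by simp
      qed
    qed
    also have "\<dots> = infsum h (\<Union>J\<in>(UNIV :: 'n set set). \<Union>\<tau>\<in>Gamma m J. Sset \<tau> J)"
    proof (rule sum_infsum[OF finite hsub])
      fix J J' :: "'n set" assume "J \<noteq> J'"
      show "(\<Union>\<tau>\<in>Gamma m J. Sset \<tau> J) \<inter> (\<Union>\<tau>\<in>Gamma m J'. Sset \<tau> J') = {}"
      proof (rule ccontr)
        assume "\<not> ?thesis"
        then obtain x \<tau> \<tau>' where h: "\<tau> \<in> Gamma m J" "x \<in> Sset \<tau> J" "\<tau>' \<in> Gamma m J'" "x \<in> Sset \<tau>' J'"
          by blast
        have "J = {k. m k \<le> x k}" by (rule S_class(1)[OF h(1,2)])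
        moreover have "J' = {k. m k \<le> x k}" by (rule S_class(1)[OF h(3,4)])
        ultimately show False using \<open>J \<noteq> J'\<close> by simp
      qed
    qed
    also have "(\<Union>J\<in>(UNIV :: 'n set set). \<Union>\<tau>\<in>Gamma m J. Sset \<tau> J) = UNIV"
    proof (rule set_eqI, rule iffI[OF UNIV_I])
      fix x :: "'n \<Rightarrow> nat"
      show "x \<in> (\<Union>J\<in>(UNIV :: 'n set set). \<Union>\<tau>\<in>Gamma m J. Sset \<tau> J)"
        using S_cover[of x m] by blast
    qed
    finally show ?thesis using LHS by simp
  qed
qed

end
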